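(* For an integer $N\geq2$ let $$L^\star(N)=\max\Big\{(N_1+1)(N_3(N_1+N_2)+3N_2+3)-5\ :\ N_1,N_3\in\mathbb{N},\ N_2\in\mathbb{N}_+,\ 2(2N_1+N_2)+N_3(N_1+1)=N\Big\}.$$ Then $\lim_{N\to\infty}\frac{N^2}{2(2L^\star(N)+1)}=\frac{23}{12}$.
   Context: $L^\star(N)$ is the largest aperture of a Kl{\o}ve array (parameters $N_1,N_2,N_3$) with $N$ sensors; since this array has a contiguous sum co-array, its number of contiguous degrees of freedom is $H=2L^\star(N)+1$ and the asymptotic redundancy is $R_\infty=\lim_{N\to\infty}N^2/(2H)$. *)

theory Defs
  imports Complex_Main
begin

definition kloeve_aperture :: "nat \<Rightarrow> nat \<Rightarrow> nat \<Rightarrow> int" where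
  "kloeve_aperture N1 N2 N3 =
     (int N1 + 1) * (int N3 * (int N1 + int N2) + 3 * int N2 + 3) - 5"

definition kloeve_params :: "nat \<Rightarrow> (nat \<times> nat \<times> nat) set" where
  "kloeve_params N = {(N1, N2, N3). N2 \<ge> 1 \<and> 2 * (2 * N1 + N2) + N3 * (N1 + 1) = N}"

definition Lstar :: "nat \<Rightarrow> int" where
  "Lstar N = Max ((\<lambda>(N1, N2, N3). kloeve_aperture N1 N2 N3) ` kloeve_params N)"

end

theory Submission
  imports Defs "HOL-Real_Asymp.Real_Asymp"
begin

lemma params_fin: "finite (kloeve_params N)"
proof -
  have "kloeve_params N \<subseteq> {..N} \<times> {..N} \<times> {..N}"
  proof
    fix x assume "x \<in> kloeve_params N"
    then obtain a b c where x: "x=(a,b,c)" and h: "2*(2*a+b)+c*(a+1) = N"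
      unfolding kloeve_params_def by auto
    moreover have "c \<le> c*(a+1)" by simp
    ultimately show "x \<in> {..N} \<times> {..N} \<times> {..N}" by auto
  qed
  thus ?thesis by (rule finite_subset) auto
qed

lemma upper:
  assumes "(a,b,c) \<in> kloeve_params N"
  shows "23*(kloeve_aperture a b c + 5) \<le> 3*(int N+4)^2 + 69*(int N + 4)"
proof -
  from assms have h: "2*(2*a+b)+c*(a+1) = N" by (simp add: kloeve_params_def)
  define A where "A = int a + 1"
  define B where "B = int b"
  define C where "C = int c"
  define M where "M = int N + 4"
  have hN: "int N = 2*(2*int a+int b)+int c*(int a+1)"
    using arg_cong[OF h, of int] by (simp add: algebra_simps)
  have M: "M = (4+C)*A + 2*B" using hN by (simp add: M_def A_def B_def C_def algebra_simps)
  have ap: "kloeve_aperture a b c + 5 = A*(C*A+(C+3)*B) + A*(3-C)"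
    by (simp add: kloeve_aperture_def A_def B_def C_def algebra_simps)
  have sos: "48*(3*M^2 - 23*(A*(C*A+(C+3)*B))) = (24*B - (11*C+21)*A)^2 + 23*((C-9)*A)^2"
    unfolding M by (simp add: power2_eq_square algebra_simps)
  have "0 \<le> (24*B - (11*C+21)*A)^2 + 23*((C-9)*A)^2" by simp
  hence "0 \<le> 48*(3*M^2 - 23*(A*(C*A+(C+3)*B)))" unfolding sos .
  hence "0 \<le> 3*M^2 - 23*(A*(C*A+(C+3)*B))" by simp
  hence k1: "23*(A*(C*A+(C+3)*B)) \<le> 3*M^2" by linarith
  have A0: "A \<ge> 0" "C \<ge> 0" "B \<ge> 0" by (auto simp: A_def C_def B_def)
  have "A*C \<ge> 0" using A0 by simp
  hence k2: "A*(3-C) \<le> 3*A" by (simp add: algebra_simps)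
  have "(3+C)*A \<ge> 0" using A0 by simp
  hence k3: "A \<le> M" using M A0 by (simp add: algebra_simps)
  show ?thesis using k1 k2 k3 ap by (simp add: M_def)
qed

lemma exist: assumes "N \<ge> (100::nat)" shows "\<exists>a b::nat. b \<ge> 1 \<and> 2*(2*a+b) + 9*(a+1) = N \<and> 23*a \<le> N + 23 \<and> N \<le> 23*a+22"
proof -
  define q where "q = N div 23"
  have q: "23*q \<le> N" "N < 23*q+23" unfolding q_def by linarith+
  define a where "a = (if odd (q+N) then q else q+1)"
  have a: "23*a \<le> N + 23" "N \<le> 23*a+22" "odd (a+N)" using q by (auto simp: a_def)
  have a2: "N \<ge> 13*a + 11" using a assms by linarith
  have "even (N - (9 + 13*a))" using a(3) a2 by (simp add: even_diff_nat)
  then obtain k where k: "N - (9 + 13*a) = 2*k" by (rule evenE)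
  have e1: "2*(2*a+k) + 9*(a+1) = N" using k a2 by presburger
  have e2: "k \<ge> 1" using k a2 by linarith
  with a e1 e2 show ?thesis by blast
qed

lemma lower_ap:
  assumes "2*(2*a+b) + 9*(a+1) = N" "23*a \<le> N + 23" "N \<le> 23*a+22"
  shows "529 * kloeve_aperture a b 9 \<ge> 69 * (int N)^2 - 140000"
proof -
  define t where "t = 23 * int a - int N"
  have hN: "int N = 13*int a + 2*int b + 9" using arg_cong[OF assms(1), of int] by simp
  have id: "529 * kloeve_aperture a b 9 - 69 * (int N)^2 = 9522*int a - 3174*t - 29624 - 69*t^2"
    unfolding t_def hN by (simp add: kloeve_aperture_def power2_eq_square algebra_simps)
  have t1: "t \<le> 23" "-23 \<le> t" using assms(2,3) by (auto simp: t_def)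
  have "\<bar>t\<bar> \<le> 23" using t1 by simp
  hence "\<bar>t\<bar> * \<bar>t\<bar> \<le> 23 * 23" by (meson abs_ge_zero mult_mono' order_trans)
  hence "t^2 \<le> 529" by (simp add: power2_eq_square abs_mult[symmetric])
  thus ?thesis using id t1 by linarith
qed

lemma Lstar_bounds:
  assumes "N \<ge> 100"
  shows "529 * Lstar N \<ge> 69 * (int N)^2 - 140000"
    and "23*(Lstar N + 5) \<le> 3*(int N+4)^2 + 69*(int N + 4)"
proof -
  let ?S = "(\<lambda>(N1, N2, N3). kloeve_aperture N1 N2 N3) ` kloeve_params N"
  have fin: "finite ?S" using params_fin by simp
  obtain a b where ab: "b \<ge> 1" "2*(2*a+b) + 9*(a+1) = N" "23*a \<le> N + 23" "N \<le> 23*a+22"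
    using exist[OF assms] by blast
  have mem: "(a,b,9) \<in> kloeve_params N" using ab by (simp add: kloeve_params_def)
  hence "kloeve_aperture a b 9 \<in> ?S" by force
  hence "kloeve_aperture a b 9 \<le> Lstar N" unfolding Lstar_def using fin by (rule Max_ge[rotated])
  thus "529 * Lstar N \<ge> 69 * (int N)^2 - 140000" using lower_ap[OF ab(2-4)] by linarith
  have ne: "?S \<noteq> {}" using mem by auto
  have "Lstar N \<in> ?S" unfolding Lstar_def using fin ne by (rule Max_in)
  then obtain x y z where "(x,y,z) \<in> kloeve_params N" "Lstar N = kloeve_aperture x y z" by auto
  thus "23*(Lstar N + 5) \<le> 3*(int N+4)^2 + 69*(int N + 4)" using upper by metis
qed

lemma aux:
  assumes "(l::real) \<le> L" "L \<le> u" "0 < 2*l+1" "c \<ge> 0"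
  shows "c/(2*(2*u+1)) \<le> c/(2*(2*L+1)) \<and> c/(2*(2*L+1)) \<le> c/(2*(2*l+1))"
proof
  show "c/(2*(2*u+1)) \<le> c/(2*(2*L+1))" using assms by (intro divide_left_mono) (auto intro!: mult_pos_pos)
  show "c/(2*(2*L+1)) \<le> c/(2*(2*l+1))" using assms by (intro divide_left_mono) (auto intro!: mult_pos_pos)
qed

theorem mainTheorem11:
  shows "(\<lambda>N::nat. (real N)^2 / (2 * (2 * real_of_int (Lstar N) + 1))) \<longlonglongrightarrow> 23 / 12"
proof (rule tendsto_sandwich)
  let ?lo = "\<lambda>N::nat. (69 * (real N)^2 - 140000) / 529"
  let ?up = "\<lambda>N::nat. (3*(real N+4)^2 + 69*(real N + 4)) / 23 - 5"
  show "(\<lambda>N::nat. (real N)^2 / (2 * (2 * ?up N + 1))) \<longlonglongrightarrow> 23 / 12" by real_asymp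
  show "(\<lambda>N::nat. (real N)^2 / (2 * (2 * ?lo N + 1))) \<longlonglongrightarrow> 23 / 12" by real_asymp
  have ev: "eventually (\<lambda>N::nat. N \<ge> 100) sequentially" by (rule eventually_ge_at_top)
  have bnd: "?lo N \<le> real_of_int (Lstar N) \<and> real_of_int (Lstar N) \<le> ?up N \<and> 0 < 2 * ?lo N + 1"
    if "N \<ge> 100" for N
  proof -
    have b1: "529 * Lstar N \<ge> 69 * (int N)^2 - 140000" and
         b2: "23*(Lstar N + 5) \<le> 3*(int N+4)^2 + 69*(int N + 4)"
      using Lstar_bounds[OF that] by auto
    have r1: "529 * real_of_int (Lstar N) \<ge> 69 * (real N)^2 - 140000"
      using b1 by (metis (mono_tags) of_int_le_iff of_int_diff of_int_mult of_int_numeral of_int_of_nat_eq of_int_power)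
    have r2: "23*(real_of_int (Lstar N) + 5) \<le> 3*(real N+4)^2 + 69*(real N + 4)"
      using b2 by (metis (mono_tags) of_int_le_iff of_int_add of_int_mult of_int_numeral of_int_of_nat_eq of_int_power)
    have "(100::real)^2 \<le> (real N)^2" using that by (intro power_mono) auto
    hence sq: "(real N)^2 \<ge> 10000" by simp
    have "?lo N \<le> real_of_int (Lstar N)" using r1 by (simp add: field_simps)
    moreover have "real_of_int (Lstar N) \<le> ?up N" using r2 by (simp add: field_simps)
    moreover have "0 < 2 * ?lo N + 1" using sq by (simp add: field_simps)
    ultimately show ?thesis by blast
  qed
  show "eventually (\<lambda>N. (real N)^2 / (2 * (2 * ?up N + 1)) \<le> (real N)^2 / (2 * (2 * real_of_int (Lstar N) + 1))) sequentially"
    using ev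
  proof eventually_elim
    case (elim N)
    from bnd[OF elim] have b: "?lo N \<le> real_of_int (Lstar N)" "real_of_int (Lstar N) \<le> ?up N" "0 < 2 * ?lo N + 1" by auto
    show ?case using aux[OF b, of "(real N)^2"] by simp
  qed
  show "eventually (\<lambda>N. (real N)^2 / (2 * (2 * real_of_int (Lstar N) + 1)) \<le> (real N)^2 / (2 * (2 * ?lo N + 1))) sequentially"
    using ev
  proof eventually_elim
    case (elim N)
    from bnd[OF elim] have b: "?lo N \<le> real_of_int (Lstar N)" "real_of_int (Lstar N) \<le> ?up N" "0 < 2 * ?lo N + 1" by auto
    show ?case using aux[OF b, of "(real N)^2"] by simp
  qed
qed

end
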